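(* Safe squares are closed under finite products and coproducts: if, for $i=1,2$, the commuting squares with $p_i:Z_i\to X_i$, $f_i:X_i\to W_i$, $q_i:Z_i\to Y_i$, $g_i:Y_i\to W_i$ (with $f_i\circ p_i=g_i\circ q_i$) are safe squares, then the square with $p_1\times p_2$, $f_1\times f_2$, $q_1\times q_2$, $g_1\times g_2$ is a safe square, and likewise the square with $p_1+p_2$, $f_1+f_2$, $q_1+q_2$, $g_1+g_2$ is a safe square.
   Context: Nominal sets over a countably infinite set $\mathcal V$ of names; products with coordinatewise action, coproducts as disjoint unions. For an equivariant $f:X\to Y$: $u$ is $f$-safe if $|\mathsf{supp}(u)|=\max\{|\mathsf{supp}(v)|:v\in f^{-1}(f(u))\}$; $\mathsf{bv}_f(u)=\mathsf{supp}(u)\setminus\mathsf{supp}(f(u))$; for finite $S$, $S\#v$ means $S\cap\mathsf{supp}(v)=\emptyset$. A commuting square $p:Z\to X$, $f:X\to W$, $q:Z\to Y$, $g:Y\to W$ ($f\circ p=g\circ q$) is a safe square if for every $f$-safe $u\in X$ and $v\in Y$ with $f(u)=g(v)$ and $\mathsf{bv}_f(u)\#v$ there is a $q$-safe $z\in Z$ with $p(z)=u$ and $q(z)=v$. *)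

theory Defs
  imports Main
begin

type_synonym name = nat
type_synonym perm = "name \<Rightarrow> name"

definition fperm :: "perm \<Rightarrow> bool" where
  "fperm \<pi> \<longleftrightarrow> bij \<pi> \<and> finite {a. \<pi> a \<noteq> a}"

record 'a nomset =
  ncarrier :: "'a set"
  nact :: "perm \<Rightarrow> 'a \<Rightarrow> 'a"

definition supports :: "'a nomset \<Rightarrow> name set \<Rightarrow> 'a \<Rightarrow> bool" where
  "supports X S x \<longleftrightarrow>
     (\<forall>\<pi>. fperm \<pi> \<and> (\<forall>a\<in>S. \<pi> a = a) \<longrightarrow> nact X \<pi> x = x)"

definition nominal_set :: "'a nomset \<Rightarrow> bool" where
  "nominal_set X \<longleftrightarrow>
     (\<forall>x\<in>ncarrier X. nact X id x = x) \<and>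
     (\<forall>\<pi> x. fperm \<pi> \<and> x \<in> ncarrier X \<longrightarrow> nact X \<pi> x \<in> ncarrier X) \<and>
     (\<forall>\<pi> \<sigma> x. fperm \<pi> \<and> fperm \<sigma> \<and> x \<in> ncarrier X \<longrightarrow>
        nact X (\<pi> \<circ> \<sigma>) x = nact X \<pi> (nact X \<sigma> x)) \<and>
     (\<forall>x\<in>ncarrier X. \<exists>S. finite S \<and> supports X S x)"

definition supp :: "'a nomset \<Rightarrow> 'a \<Rightarrow> name set" where
  "supp X x = \<Inter>{S. finite S \<and> supports X S x}"

definition equivariant :: "'a nomset \<Rightarrow> 'b nomset \<Rightarrow> ('a \<Rightarrow> 'b) \<Rightarrow> bool" where
  "equivariant X Y f \<longleftrightarrow>
     (\<forall>x\<in>ncarrier X. f x \<in> ncarrier Y) \<and>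
     (\<forall>\<pi> x. fperm \<pi> \<and> x \<in> ncarrier X \<longrightarrow> f (nact X \<pi> x) = nact Y \<pi> (f x))"

definition prod_nom :: "'a nomset \<Rightarrow> 'b nomset \<Rightarrow> ('a \<times> 'b) nomset" where
  "prod_nom X Y = \<lparr> ncarrier = ncarrier X \<times> ncarrier Y,
                    nact = (\<lambda>\<pi> (x, y). (nact X \<pi> x, nact Y \<pi> y)) \<rparr>"

definition sum_nom :: "'a nomset \<Rightarrow> 'b nomset \<Rightarrow> ('a + 'b) nomset" where
  "sum_nom X Y = \<lparr> ncarrier = ncarrier X <+> ncarrier Y,
                   nact = (\<lambda>\<pi>. map_sum (nact X \<pi>) (nact Y \<pi>)) \<rparr>"

definition f_safe :: "'a nomset \<Rightarrow> ('a \<Rightarrow> 'b) \<Rightarrow> 'a \<Rightarrow> bool" where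
  "f_safe X f u \<longleftrightarrow> u \<in> ncarrier X \<and>
     (\<forall>v\<in>ncarrier X. f v = f u \<longrightarrow> card (supp X v) \<le> card (supp X u))"

definition bv :: "'a nomset \<Rightarrow> 'b nomset \<Rightarrow> ('a \<Rightarrow> 'b) \<Rightarrow> 'a \<Rightarrow> name set" where
  "bv X W f u = supp X u - supp W (f u)"

definition fresh :: "'a nomset \<Rightarrow> name set \<Rightarrow> 'a \<Rightarrow> bool" where
  "fresh X S v \<longleftrightarrow> S \<inter> supp X v = {}"

definition safe_square ::
  "'z nomset \<Rightarrow> 'x nomset \<Rightarrow> 'y nomset \<Rightarrow> 'w nomset \<Rightarrow>
   ('z \<Rightarrow> 'x) \<Rightarrow> ('x \<Rightarrow> 'w) \<Rightarrow> ('z \<Rightarrow> 'y) \<Rightarrow> ('y \<Rightarrow> 'w) \<Rightarrow> bool" where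
  "safe_square Z X Y W p f q g \<longleftrightarrow>
     (\<forall>z\<in>ncarrier Z. f (p z) = g (q z)) \<and>
     (\<forall>u v. f_safe X f u \<and> v \<in> ncarrier Y \<and> f u = g v \<and> fresh Y (bv X W f u) v \<longrightarrow>
        (\<exists>z\<in>ncarrier Z. f_safe Z q z \<and> p z = u \<and> q z = v))"

end

theory Submission
  imports Defs
begin


definition sw :: "name \<Rightarrow> name \<Rightarrow> perm" where
  "sw a b c = (if c = a then b else if c = b then a else c)"

lemma sw_sw: "sw a b \<circ> sw a b = id"
  by (rule ext) (simp add: sw_def)

lemma sw_sw_comp: "sw a b \<circ> (sw a b \<circ> \<pi>) = \<pi>"
  by (rule ext) (simp add: sw_def)

lemma fperm_sw: "fperm (sw a b)"
proof -
  have "bij (sw a b)" using sw_sw by (metis o_bij)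
  moreover have "{c. sw a b c \<noteq> c} \<subseteq> {a,b}" by (auto simp: sw_def)
  hence "finite {c. sw a b c \<noteq> c}" by (rule finite_subset) simp
  ultimately show ?thesis by (simp add: fperm_def)
qed

lemma fperm_id: "fperm id" by (simp add: fperm_def)

lemma fperm_comp: "fperm \<pi> \<Longrightarrow> fperm \<sigma> \<Longrightarrow> fperm (\<pi> \<circ> \<sigma>)"
  unfolding fperm_def
proof (intro conjI)
  assume a: "bij \<pi> \<and> finite {a. \<pi> a \<noteq> a}" "bij \<sigma> \<and> finite {a. \<sigma> a \<noteq> a}"
  thus "bij (\<pi> \<circ> \<sigma>)" by (simp add: bij_comp)
  have "{a. (\<pi> \<circ> \<sigma>) a \<noteq> a} \<subseteq> {a. \<pi> a \<noteq> a} \<union> {a. \<sigma> a \<noteq> a}" by auto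
  thus "finite {a. (\<pi> \<circ> \<sigma>) a \<noteq> a}" using a by (meson finite_Un finite_subset)
qed

lemma fperm_inv: "fperm \<pi> \<Longrightarrow> fperm (inv \<pi>)"
  unfolding fperm_def
proof (intro conjI)
  assume a: "bij \<pi> \<and> finite {a. \<pi> a \<noteq> a}"
  thus "bij (inv \<pi>)" by (simp add: bij_imp_bij_inv)
  have "{a. inv \<pi> a \<noteq> a} \<subseteq> \<pi> ` {a. \<pi> a \<noteq> a}"
  proof
    fix a assume "a \<in> {a. inv \<pi> a \<noteq> a}"
    moreover have "\<pi> (inv \<pi> a) = a" using a by (meson bij_inv_eq_iff)
    ultimately show "a \<in> \<pi> ` {a. \<pi> a \<noteq> a}" by (metis (mono_tags, lifting) image_eqI mem_Collect_eq)
  qed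
  thus "finite {a. inv \<pi> a \<noteq> a}" using a by (meson finite_imageI finite_subset)
qed

lemma fperm_inv_r: "fperm \<pi> \<Longrightarrow> \<pi> \<circ> inv \<pi> = id"
  unfolding fperm_def by (meson bij_is_surj surj_iff)
lemma fperm_inv_l: "fperm \<pi> \<Longrightarrow> inv \<pi> \<circ> \<pi> = id"
  unfolding fperm_def by (meson bij_is_inj inv_o_cancel)
lemma fperm_inj: "fperm \<pi> \<Longrightarrow> inj \<pi>"
  unfolding fperm_def by (simp add: bij_is_inj)

lemma nom_id: "nominal_set X \<Longrightarrow> x \<in> ncarrier X \<Longrightarrow> nact X id x = x"
  by (simp add: nominal_set_def)
lemma nom_closed: "nominal_set X \<Longrightarrow> fperm \<pi> \<Longrightarrow> x \<in> ncarrier X \<Longrightarrow> nact X \<pi> x \<in> ncarrier X"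
  by (simp add: nominal_set_def)
lemma nom_comp: "nominal_set X \<Longrightarrow> fperm \<pi> \<Longrightarrow> fperm \<sigma> \<Longrightarrow> x \<in> ncarrier X \<Longrightarrow>
   nact X (\<pi> \<circ> \<sigma>) x = nact X \<pi> (nact X \<sigma> x)"
  by (simp add: nominal_set_def)
lemma nom_fin: "nominal_set X \<Longrightarrow> x \<in> ncarrier X \<Longrightarrow> \<exists>S. finite S \<and> supports X S x"
  by (simp add: nominal_set_def)

lemma supp_subset: "finite S \<Longrightarrow> supports X S x \<Longrightarrow> supp X x \<subseteq> S"
  unfolding supp_def by blast

lemma finite_supp: "nominal_set X \<Longrightarrow> x \<in> ncarrier X \<Longrightarrow> finite (supp X x)"
  using nom_fin supp_subset finite_subset by metis

lemma notin_supp: "a \<notin> supp X x \<Longrightarrow> \<exists>S. finite S \<and> supports X S x \<and> a \<notin> S"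
  unfolding supp_def by blast

lemma fresh_name: "finite (S::nat set) \<Longrightarrow> \<exists>c. c \<notin> S"
  using ex_new_if_finite infinite_UNIV_nat by blast

lemma swap_fix:
  assumes X: "nominal_set X" and x: "x \<in> ncarrier X"
    and a: "a \<notin> supp X x" and b: "b \<notin> supp X x"
  shows "nact X (sw a b) x = x"
proof -
  obtain Sa where Sa: "finite Sa" "supports X Sa x" "a \<notin> Sa" using notin_supp[OF a] by blast
  obtain Sb where Sb: "finite Sb" "supports X Sb x" "b \<notin> Sb" using notin_supp[OF b] by blast
  show ?thesis
  proof (cases "b \<notin> Sa")
    case True
    have "\<forall>s\<in>Sa. sw a b s = s" using True Sa(3) by (auto simp: sw_def)
    thus ?thesis using Sa(2) fperm_sw unfolding supports_def by blast
  next
    case False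
    show ?thesis
    proof (cases "a \<notin> Sb")
      case True
      have "\<forall>s\<in>Sb. sw a b s = s" using True Sb(3) by (auto simp: sw_def)
      thus ?thesis using Sb(2) fperm_sw unfolding supports_def by blast
    next
      case False2: False
      have ab: "a \<noteq> b" using False Sa(3) by auto
      obtain c where c: "c \<notin> Sa \<union> Sb \<union> {a,b}" using fresh_name[of "Sa \<union> Sb \<union> {a,b}"] Sa Sb by blast
      have eq: "sw a b = sw a c \<circ> (sw b c \<circ> sw a c)"
        using c ab by (intro ext) (auto simp: sw_def)
      have 1: "nact X (sw a c) x = x"
      proof -
        have "\<forall>s\<in>Sa. sw a c s = s" using c Sa(3) by (auto simp: sw_def)
        thus ?thesis using Sa(2) fperm_sw unfolding supports_def by blast
      qed
      have 2: "nact X (sw b c) x = x"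
      proof -
        have "\<forall>s\<in>Sb. sw b c s = s" using c Sb(3) by (auto simp: sw_def)
        thus ?thesis using Sb(2) fperm_sw unfolding supports_def by blast
      qed
      show ?thesis unfolding eq
        using nom_comp[OF X fperm_sw fperm_comp[OF fperm_sw fperm_sw] x]
          nom_comp[OF X fperm_sw fperm_sw x] 1 2 by simp
    qed
  qed
qed

lemma supp_supports:
  assumes X: "nominal_set X" and x: "x \<in> ncarrier X"
  shows "supports X (supp X x) x"
proof -
  have "\<forall>\<pi>. card {a. \<pi> a \<noteq> a} = n \<and> fperm \<pi> \<and> (\<forall>a\<in>supp X x. \<pi> a = a) \<longrightarrow> nact X \<pi> x = x" for n
  proof (induction n rule: less_induct)
    case (less n)
    show ?case
    proof (intro allI impI)
      fix \<pi> assume h: "card {a. \<pi> a \<noteq> a} = n \<and> fperm \<pi> \<and> (\<forall>a\<in>supp X x. \<pi> a = a)"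
      hence fin: "finite {a. \<pi> a \<noteq> a}" and fp: "fperm \<pi>" by (auto simp: fperm_def)
      show "nact X \<pi> x = x"
      proof (cases "{a. \<pi> a \<noteq> a} = {}")
        case True
        hence "\<And>c. \<pi> c = c" by blast
        hence "\<pi> = id" by (simp add: fun_eq_iff)
        thus ?thesis using nom_id[OF X x] by simp
      next
        case False
        then obtain a where a: "\<pi> a \<noteq> a" by auto
        define b where "b = \<pi> a"
        define \<pi>' where "\<pi>' = sw a b \<circ> \<pi>"
        have fp': "fperm \<pi>'" unfolding \<pi>'_def by (rule fperm_comp[OF fperm_sw fp])
        have injp: "inj \<pi>" using fperm_inj[OF fp] .
        have sub: "{c. \<pi>' c \<noteq> c} \<subseteq> {c. \<pi> c \<noteq> c} - {a}"
        proof
          fix c assume "c \<in> {c. \<pi>' c \<noteq> c}"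
          hence c: "sw a b (\<pi> c) \<noteq> c" by (simp add: \<pi>'_def)
          have "c \<noteq> a"
          proof
            assume ca: "c = a"
            hence "\<pi> c = b" by (simp add: b_def)
            hence "sw a b (\<pi> c) = a" by (simp add: sw_def)
            thus False using c ca by simp
          qed
          moreover have "\<pi> c \<noteq> c"
          proof
            assume e: "\<pi> c = c"
            have "c \<noteq> b" using e a injp b_def by (metis injD)
            thus False using c e \<open>c \<noteq> a\<close> by (simp add: sw_def)
          qed
          ultimately show "c \<in> {c. \<pi> c \<noteq> c} - {a}" by simp
        qed
        hence "{c. \<pi>' c \<noteq> c} \<subset> {c. \<pi> c \<noteq> c}" using a by blast
        hence "card {c. \<pi>' c \<noteq> c} < card {c. \<pi> c \<noteq> c}"
          by (rule psubset_card_mono[OF fin])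
        hence "card {c. \<pi>' c \<noteq> c} < n" using h by simp
        moreover have fix': "\<forall>s\<in>supp X x. \<pi>' s = s"
        proof
          fix s assume s: "s \<in> supp X x"
          hence ps: "\<pi> s = s" using h by blast
          have "s \<noteq> a" using ps a by auto
          moreover have "s \<noteq> b" using ps a injp b_def by (metis injD)
          ultimately show "\<pi>' s = s" by (simp add: \<pi>'_def sw_def ps)
        qed
        ultimately have ih: "nact X \<pi>' x = x" using less.IH[rule_format, OF _ conjI[OF refl conjI[OF fp' fix']]] by simp
        have an: "a \<notin> supp X x" using h a by blast
        have bn: "b \<notin> supp X x" using h a injp b_def by (metis injD)
        have "\<pi> = sw a b \<circ> \<pi>'" unfolding \<pi>'_def by (simp add: sw_sw_comp)
        hence "nact X \<pi> x = nact X (sw a b) (nact X \<pi>' x)"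
          using nom_comp[OF X fperm_sw fp' x] by simp
        also have "\<dots> = x" using ih swap_fix[OF X x an bn] by simp
        finally show ?thesis .
      qed
    qed
  qed
  thus ?thesis unfolding supports_def by blast
qed

lemma fix_by_supp: "nominal_set X \<Longrightarrow> x \<in> ncarrier X \<Longrightarrow> fperm \<pi> \<Longrightarrow> \<forall>a\<in>supp X x. \<pi> a = a \<Longrightarrow> nact X \<pi> x = x"
proof -
  assume a: "nominal_set X" "x \<in> ncarrier X" "fperm \<pi>" "\<forall>a\<in>supp X x. \<pi> a = a"
  have "supports X (supp X x) x" using supp_supports a(1,2) .
  thus ?thesis using a(3,4) unfolding supports_def by blast
qed

lemma supp_equivariant:
  assumes f: "equivariant X Y f" and x: "x \<in> ncarrier X"
  shows "supp Y (f x) \<subseteq> supp X x"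
proof -
  have "{S. finite S \<and> supports X S x} \<subseteq> {S. finite S \<and> supports Y S (f x)}"
  proof (clarify)
    fix S assume S: "finite S" "supports X S x"
    show "supports Y S (f x)" unfolding supports_def
    proof (intro allI impI)
      fix \<pi> assume p: "fperm \<pi> \<and> (\<forall>a\<in>S. \<pi> a = a)"
      hence "nact X \<pi> x = x" using S unfolding supports_def by blast
      moreover have "f (nact X \<pi> x) = nact Y \<pi> (f x)" using f x p unfolding equivariant_def by blast
      ultimately show "nact Y \<pi> (f x) = f x" by simp
    qed
  qed
  thus ?thesis unfolding supp_def by (rule Inter_anti_mono)
qed



lemma supp_perm_sub:
  assumes X: "nominal_set X" and x: "x \<in> ncarrier X" and fp: "fperm \<pi>"
  shows "supp X (nact X \<pi> x) \<subseteq> \<pi> ` supp X x"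
proof (rule supp_subset)
  show "finite (\<pi> ` supp X x)" using finite_supp[OF X x] by simp
  show "supports X (\<pi> ` supp X x) (nact X \<pi> x)" unfolding supports_def
  proof (intro allI impI)
    fix \<sigma> assume s: "fperm \<sigma> \<and> (\<forall>a\<in>\<pi> ` supp X x. \<sigma> a = a)"
    define \<tau> where "\<tau> = inv \<pi> \<circ> (\<sigma> \<circ> \<pi>)"
    have ft: "fperm \<tau>" unfolding \<tau>_def using s fp by (simp add: fperm_comp fperm_inv)
    have "\<forall>a\<in>supp X x. \<tau> a = a"
    proof
      fix a assume "a \<in> supp X x"
      hence "\<sigma> (\<pi> a) = \<pi> a" using s by blast
      thus "\<tau> a = a" unfolding \<tau>_def using fperm_inv_l[OF fp] by (metis comp_apply id_apply)
    qed
    hence tx: "nact X \<tau> x = x" using fix_by_supp[OF X x ft] by blast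
    have e: "\<sigma> \<circ> \<pi> = \<pi> \<circ> \<tau>" unfolding \<tau>_def using fperm_inv_r[OF fp]
      by (simp add: comp_assoc[symmetric])
    have "nact X \<sigma> (nact X \<pi> x) = nact X (\<sigma> \<circ> \<pi>) x" using nom_comp[OF X _ fp x] s by simp
    also have "\<dots> = nact X \<pi> (nact X \<tau> x)" unfolding e using nom_comp[OF X fp ft x] .
    finally show "nact X \<sigma> (nact X \<pi> x) = nact X \<pi> x" using tx by simp
  qed
qed

lemma inv_act:
  assumes X: "nominal_set X" and x: "x \<in> ncarrier X" and fp: "fperm \<pi>"
  shows "nact X (inv \<pi>) (nact X \<pi> x) = x" "nact X \<pi> (nact X (inv \<pi>) x) = x"
proof -
  show "nact X (inv \<pi>) (nact X \<pi> x) = x"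
    using nom_comp[OF X fperm_inv[OF fp] fp x] fperm_inv_l[OF fp] nom_id[OF X x] by simp
  show "nact X \<pi> (nact X (inv \<pi>) x) = x"
    using nom_comp[OF X fp fperm_inv[OF fp] x] fperm_inv_r[OF fp] nom_id[OF X x] by simp
qed

lemma supp_perm:
  assumes X: "nominal_set X" and x: "x \<in> ncarrier X" and fp: "fperm \<pi>"
  shows "supp X (nact X \<pi> x) = \<pi> ` supp X x"
proof
  show "supp X (nact X \<pi> x) \<subseteq> \<pi> ` supp X x" by (rule supp_perm_sub[OF X x fp])
  have px: "nact X \<pi> x \<in> ncarrier X" using nom_closed[OF X fp x] .
  have "supp X x \<subseteq> inv \<pi> ` supp X (nact X \<pi> x)"
    using supp_perm_sub[OF X px fperm_inv[OF fp]] inv_act(1)[OF X x fp] by simp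
  hence "\<pi> ` supp X x \<subseteq> \<pi> ` inv \<pi> ` supp X (nact X \<pi> x)" by blast
  also have "\<dots> = supp X (nact X \<pi> x)" using fperm_inv_r[OF fp] by (simp add: image_comp)
  finally show "\<pi> ` supp X x \<subseteq> supp X (nact X \<pi> x)" .
qed

lemma card_supp_perm:
  assumes X: "nominal_set X" and x: "x \<in> ncarrier X" and fp: "fperm \<pi>"
  shows "card (supp X (nact X \<pi> x)) = card (supp X x)"
  using supp_perm[OF X x fp] fperm_inj[OF fp] by (simp add: card_image inj_on_subset)

lemma rename_exists:
  assumes "finite D" "finite F" "finite G" "D \<inter> F = {}"
  shows "\<exists>\<pi>. fperm \<pi> \<and> (\<forall>a\<in>F. \<pi> a = a) \<and> \<pi> ` D \<inter> G = {}"
  using assms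
proof (induction D rule: finite_induct)
  case empty
  have "fperm (\<lambda>a. a)" using fperm_id by (simp add: id_def)
  thus ?case by auto
next
  case (insert d D)
  have DF: "D \<inter> F = {}" using insert.prems(3) by blast
  obtain \<pi> where p: "fperm \<pi>" "\<forall>a\<in>F. \<pi> a = a" "\<pi> ` D \<inter> G = {}"
    using insert.IH[OF insert.prems(1,2) DF] by blast
  have "finite (G \<union> F \<union> \<pi> ` D \<union> {\<pi> d})" using insert.hyps(1) insert.prems(1,2) by simp
  then obtain c where c: "c \<notin> G \<union> F \<union> \<pi> ` D \<union> {\<pi> d}"
    using fresh_name by metis
  define \<pi>2 where "\<pi>2 = sw (\<pi> d) c \<circ> \<pi>"
  have inj: "inj \<pi>" using fperm_inj[OF p(1)] .
  have dF: "d \<notin> F" using insert.prems(3) by auto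
  have "fperm \<pi>2" unfolding \<pi>2_def by (rule fperm_comp[OF fperm_sw p(1)])
  moreover have "\<forall>a\<in>F. \<pi>2 a = a"
  proof
    fix a assume a: "a \<in> F"
    have "\<pi> d \<noteq> a" using a p(2) dF inj by (metis injD)
    moreover have "c \<noteq> a" using a c by auto
    ultimately show "\<pi>2 a = a" using p(2) a by (simp add: \<pi>2_def sw_def)
  qed
  moreover have "\<pi>2 ` insert d D \<inter> G = {}"
  proof -
    have "\<pi>2 d = c" by (simp add: \<pi>2_def sw_def)
    moreover have "\<pi>2 e = \<pi> e" if "e \<in> D" for e
    proof -
      have "\<pi> e \<noteq> \<pi> d" using that insert(2) inj by (metis injD)
      moreover have "\<pi> e \<noteq> c" using that c by auto
      ultimately show ?thesis by (simp add: \<pi>2_def sw_def)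
    qed
    ultimately show ?thesis using c p(3) by auto
  qed
  ultimately show ?case by blast
qed

lemma rename_elem:
  assumes X: "nominal_set X" and x: "x \<in> ncarrier X" and F: "finite F" and G: "finite G"
  shows "\<exists>\<pi>. fperm \<pi> \<and> (\<forall>a\<in>F. \<pi> a = a) \<and> supp X (nact X \<pi> x) \<inter> G \<subseteq> F"
proof -
  obtain \<pi> where p: "fperm \<pi>" "\<forall>a\<in>F. \<pi> a = a" "\<pi> ` (supp X x - F) \<inter> G = {}"
    using rename_exists[of "supp X x - F" F G] finite_supp[OF X x] F G by auto
  have "supp X (nact X \<pi> x) \<inter> G \<subseteq> F"
  proof
    fix b assume b: "b \<in> supp X (nact X \<pi> x) \<inter> G"
    then obtain a where a: "a \<in> supp X x" "b = \<pi> a" using supp_perm[OF X x p(1)] by auto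
    show "b \<in> F"
    proof (cases "a \<in> F")
      case True thus ?thesis using a p(2) by simp
    next
      case False thus ?thesis using a b p(3) by blast
    qed
  qed
  thus ?thesis using p by blast
qed

lemma equiv_act: "equivariant X Y f \<Longrightarrow> fperm \<pi> \<Longrightarrow> x \<in> ncarrier X \<Longrightarrow> f (nact X \<pi> x) = nact Y \<pi> (f x)"
  unfolding equivariant_def by blast
lemma equiv_in: "equivariant X Y f \<Longrightarrow> x \<in> ncarrier X \<Longrightarrow> f x \<in> ncarrier Y"
  unfolding equivariant_def by blast

lemma safe_perm:
  assumes Z: "nominal_set Z" and Y: "nominal_set Y" and q: "equivariant Z Y q"
    and s: "f_safe Z q z" and fp: "fperm \<pi>"
  shows "f_safe Z q (nact Z \<pi> z)"
proof -
  have z: "z \<in> ncarrier Z" using s by (simp add: f_safe_def)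
  have pz: "nact Z \<pi> z \<in> ncarrier Z" using nom_closed[OF Z fp z] .
  have "card (supp Z y) \<le> card (supp Z (nact Z \<pi> z))"
    if y: "y \<in> ncarrier Z" and e: "q y = q (nact Z \<pi> z)" for y
  proof -
    define y' where "y' = nact Z (inv \<pi>) y"
    have y'c: "y' \<in> ncarrier Z" unfolding y'_def using nom_closed[OF Z fperm_inv[OF fp] y] .
    have "q y' = nact Y (inv \<pi>) (q y)" unfolding y'_def using equiv_act[OF q fperm_inv[OF fp] y] .
    also have "\<dots> = nact Y (inv \<pi>) (nact Y \<pi> (q z))" using e equiv_act[OF q fp z] by simp
    also have "\<dots> = q z" using inv_act(1)[OF Y equiv_in[OF q z] fp] .
    finally have "card (supp Z y') \<le> card (supp Z z)" using s y'c by (simp add: f_safe_def)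
    moreover have "card (supp Z y') = card (supp Z y)" unfolding y'_def
      using card_supp_perm[OF Z y fperm_inv[OF fp]] .
    moreover have "card (supp Z (nact Z \<pi> z)) = card (supp Z z)" using card_supp_perm[OF Z z fp] .
    ultimately show ?thesis by simp
  qed
  thus ?thesis using pz by (simp add: f_safe_def)
qed

lemma supp_prod:
  assumes X: "nominal_set X" and Y: "nominal_set Y" and x: "x \<in> ncarrier X" and y: "y \<in> ncarrier Y"
  shows "supp (prod_nom X Y) (x, y) = supp X x \<union> supp Y y"
proof
  show "supp (prod_nom X Y) (x, y) \<subseteq> supp X x \<union> supp Y y"
  proof (rule supp_subset)
    show "finite (supp X x \<union> supp Y y)" using finite_supp[OF X x] finite_supp[OF Y y] by simp
    show "supports (prod_nom X Y) (supp X x \<union> supp Y y) (x, y)"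
      unfolding supports_def
    proof (intro allI impI)
      fix \<pi> assume p: "fperm \<pi> \<and> (\<forall>a\<in>supp X x \<union> supp Y y. \<pi> a = a)"
      have "nact X \<pi> x = x" using fix_by_supp[OF X x] p by blast
      moreover have "nact Y \<pi> y = y" using fix_by_supp[OF Y y] p by blast
      ultimately show "nact (prod_nom X Y) \<pi> (x, y) = (x, y)" by (simp add: prod_nom_def)
    qed
  qed
  show "supp X x \<union> supp Y y \<subseteq> supp (prod_nom X Y) (x, y)"
    unfolding supp_def[of "prod_nom X Y"]
  proof (rule Inter_greatest)
    fix S assume "S \<in> {S. finite S \<and> supports (prod_nom X Y) S (x, y)}"
    hence S: "finite S" "supports (prod_nom X Y) S (x, y)" by auto
    have "nact X \<pi> x = x \<and> nact Y \<pi> y = y" if "fperm \<pi> \<and> (\<forall>a\<in>S. \<pi> a = a)" for \<pi>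
    proof -
      have "nact (prod_nom X Y) \<pi> (x, y) = (x, y)" using S(2) that unfolding supports_def by blast
      thus ?thesis by (simp add: prod_nom_def)
    qed
    hence sx: "supports X S x" and sy: "supports Y S y" unfolding supports_def by blast+
    have "supp X x \<subseteq> S" using supp_subset[OF S(1) sx] .
    moreover have "supp Y y \<subseteq> S" using supp_subset[OF S(1) sy] .
    ultimately
    show "supp X x \<union> supp Y y \<subseteq> S" by simp
  qed
qed

lemma supp_Inl: "supp (sum_nom X Y) (Inl x) = supp X x"
proof -
  have "supports (sum_nom X Y) S (Inl x) = supports X S x" for S
    unfolding supports_def sum_nom_def by simp
  thus ?thesis unfolding supp_def by simp
qed

lemma supp_Inr: "supp (sum_nom X Y) (Inr y) = supp Y y"
proof -
  have "supports (sum_nom X Y) S (Inr y) = supports Y S y" for S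
    unfolding supports_def sum_nom_def by simp
  thus ?thesis unfolding supp_def by simp
qed



lemma comp_safe:
  assumes X: "nominal_set X" and W: "nominal_set W" and f: "equivariant X W f"
    and u: "u \<in> ncarrier X" and B: "finite B"
    and H: "\<And>y. y \<in> ncarrier X \<Longrightarrow> f y = f u \<Longrightarrow> card (supp X y \<union> B) \<le> card (supp X u \<union> B)"
  shows "f_safe X f u \<and> bv X W f u \<inter> B = {}"
proof -
  define F where "F = supp W (f u)"
  define U where "U = supp X u"
  have fu: "f u \<in> ncarrier W" using equiv_in[OF f u] .
  have finF: "finite F" unfolding F_def using finite_supp[OF W fu] .
  have finU: "finite U" unfolding U_def using finite_supp[OF X u] .
  have FU: "F \<subseteq> U" unfolding F_def U_def using supp_equivariant[OF f u] .
  have key: "card (supp X y) + card (U \<inter> B) \<le> card U + card (F \<inter> B)"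
    if y: "y \<in> ncarrier X" and e: "f y = f u" for y
  proof -
    obtain \<pi> where p: "fperm \<pi>" "\<forall>a\<in>F. \<pi> a = a" "supp X (nact X \<pi> y) \<inter> B \<subseteq> F"
      using rename_elem[OF X y finF B] by blast
    define y' where "y' = nact X \<pi> y"
    have y': "y' \<in> ncarrier X" unfolding y'_def using nom_closed[OF X p(1) y] .
    have "f y' = nact W \<pi> (f y)" unfolding y'_def using equiv_act[OF f p(1) y] .
    also have "\<dots> = f u" using e fix_by_supp[OF W fu p(1)] p(2) unfolding F_def by simp
    finally have "card (supp X y' \<union> B) \<le> card (U \<union> B)" using H[OF y'] unfolding U_def by simp
    moreover have "card (supp X y') = card (supp X y)" unfolding y'_def using card_supp_perm[OF X y p(1)] .
    moreover have "card (supp X y' \<inter> B) \<le> card (F \<inter> B)"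
      using p(3) finF unfolding y'_def by (intro card_mono) auto
    moreover have "card (supp X y') + card B = card (supp X y' \<union> B) + card (supp X y' \<inter> B)"
      using card_Un_Int[OF finite_supp[OF X y'] B] .
    moreover have "card U + card B = card (U \<union> B) + card (U \<inter> B)"
      using card_Un_Int[OF finU B] .
    ultimately show ?thesis by linarith
  qed
  have FBle: "card (F \<inter> B) \<le> card (U \<inter> B)" using FU finU by (intro card_mono) auto
  have "f_safe X f u" unfolding f_safe_def
  proof (intro conjI ballI impI)
    show "u \<in> ncarrier X" using u .
    fix y assume "y \<in> ncarrier X" "f y = f u"
    thus "card (supp X y) \<le> card (supp X u)" using key FBle unfolding U_def by fastforce
  qed
  moreover have "bv X W f u \<inter> B = {}"
  proof -
    have "card (U \<inter> B) \<le> card (F \<inter> B)" using key[OF u refl] unfolding U_def by simp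
    hence "F \<inter> B = U \<inter> B" using FU finU by (intro card_subset_eq) (auto intro: le_antisym FBle)
    thus ?thesis unfolding bv_def F_def[symmetric] U_def[symmetric] by blast
  qed
  ultimately show ?thesis by blast
qed

lemma prod_safe:
  assumes Z1: "nominal_set Z1" and Z2: "nominal_set Z2" and Y1: "nominal_set Y1" and Y2: "nominal_set Y2"
    and q1: "equivariant Z1 Y1 q1" and q2: "equivariant Z2 Y2 q2"
    and s1: "f_safe Z1 q1 z1" and s2: "f_safe Z2 q2 z2"
    and I: "supp Z1 z1 \<inter> supp Z2 z2 \<subseteq> supp Y1 (q1 z1) \<inter> supp Y2 (q2 z2)"
  shows "f_safe (prod_nom Z1 Z2) (map_prod q1 q2) (z1, z2)"
proof -
  have z1: "z1 \<in> ncarrier Z1" and z2: "z2 \<in> ncarrier Z2" using s1 s2 by (auto simp: f_safe_def)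
  define Q where "Q = supp Y1 (q1 z1) \<inter> supp Y2 (q2 z2)"
  have Qz: "supp Z1 z1 \<inter> supp Z2 z2 = Q"
    using I supp_equivariant[OF q1 z1] supp_equivariant[OF q2 z2] unfolding Q_def by blast
  have fz1: "finite (supp Z1 z1)" and fz2: "finite (supp Z2 z2)"
    using finite_supp[OF Z1 z1] finite_supp[OF Z2 z2] .
  show ?thesis unfolding f_safe_def
  proof (intro conjI ballI impI)
    show "(z1, z2) \<in> ncarrier (prod_nom Z1 Z2)" using z1 z2 by (simp add: prod_nom_def)
    fix y assume y: "y \<in> ncarrier (prod_nom Z1 Z2)" and e: "map_prod q1 q2 y = map_prod q1 q2 (z1, z2)"
    obtain y1 y2 where yy: "y = (y1, y2)" by (cases y)
    have y1: "y1 \<in> ncarrier Z1" and y2: "y2 \<in> ncarrier Z2" using y yy by (auto simp: prod_nom_def)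
    have e1: "q1 y1 = q1 z1" and e2: "q2 y2 = q2 z2" using e yy by auto
    have c1: "card (supp Z1 y1) \<le> card (supp Z1 z1)" using s1 y1 e1 by (simp add: f_safe_def)
    have c2: "card (supp Z2 y2) \<le> card (supp Z2 z2)" using s2 y2 e2 by (simp add: f_safe_def)
    have fy1: "finite (supp Z1 y1)" and fy2: "finite (supp Z2 y2)"
      using finite_supp[OF Z1 y1] finite_supp[OF Z2 y2] .
    have "Q \<subseteq> supp Z1 y1 \<inter> supp Z2 y2"
      using supp_equivariant[OF q1 y1] supp_equivariant[OF q2 y2] e1 e2 unfolding Q_def by auto
    hence cQ: "card Q \<le> card (supp Z1 y1 \<inter> supp Z2 y2)" using fy1 by (intro card_mono) auto
    have "card (supp Z1 y1) + card (supp Z2 y2) = card (supp Z1 y1 \<union> supp Z2 y2) + card (supp Z1 y1 \<inter> supp Z2 y2)"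
      using card_Un_Int[OF fy1 fy2] .
    moreover have "card (supp Z1 z1) + card (supp Z2 z2) = card (supp Z1 z1 \<union> supp Z2 z2) + card Q"
      using card_Un_Int[OF fz1 fz2] Qz by simp
    ultimately have "card (supp Z1 y1 \<union> supp Z2 y2) \<le> card (supp Z1 z1 \<union> supp Z2 z2)"
      using c1 c2 cQ by linarith
    thus "card (supp (prod_nom Z1 Z2) y) \<le> card (supp (prod_nom Z1 Z2) (z1, z2))"
      using supp_prod[OF Z1 Z2 y1 y2] supp_prod[OF Z1 Z2 z1 z2] yy by simp
  qed
qed



theorem lemma5p37:
  fixes Z1 :: "'z1 nomset" and X1 :: "'x1 nomset" and Y1 :: "'y1 nomset" and W1 :: "'w1 nomset"
    and Z2 :: "'z2 nomset" and X2 :: "'x2 nomset" and Y2 :: "'y2 nomset" and W2 :: "'w2 nomset"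
    and p1 :: "'z1 \<Rightarrow> 'x1" and f1 :: "'x1 \<Rightarrow> 'w1" and q1 :: "'z1 \<Rightarrow> 'y1" and g1 :: "'y1 \<Rightarrow> 'w1"
    and p2 :: "'z2 \<Rightarrow> 'x2" and f2 :: "'x2 \<Rightarrow> 'w2" and q2 :: "'z2 \<Rightarrow> 'y2" and g2 :: "'y2 \<Rightarrow> 'w2"
  assumes nom1: "nominal_set Z1" "nominal_set X1" "nominal_set Y1" "nominal_set W1"
    and nom2: "nominal_set Z2" "nominal_set X2" "nominal_set Y2" "nominal_set W2"
    and eqv1: "equivariant Z1 X1 p1" "equivariant X1 W1 f1"
              "equivariant Z1 Y1 q1" "equivariant Y1 W1 g1"
    and eqv2: "equivariant Z2 X2 p2" "equivariant X2 W2 f2"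
              "equivariant Z2 Y2 q2" "equivariant Y2 W2 g2"
    and safe1: "safe_square Z1 X1 Y1 W1 p1 f1 q1 g1"
    and safe2: "safe_square Z2 X2 Y2 W2 p2 f2 q2 g2"
  shows "safe_square (prod_nom Z1 Z2) (prod_nom X1 X2) (prod_nom Y1 Y2) (prod_nom W1 W2)
           (map_prod p1 p2) (map_prod f1 f2) (map_prod q1 q2) (map_prod g1 g2)
       \<and> safe_square (sum_nom Z1 Z2) (sum_nom X1 X2) (sum_nom Y1 Y2) (sum_nom W1 W2)
           (map_sum p1 p2) (map_sum f1 f2) (map_sum q1 q2) (map_sum g1 g2)"
proof (rule conjI)
  have Z1: "nominal_set Z1" and X1: "nominal_set X1" and Y1: "nominal_set Y1" and W1: "nominal_set W1"
    using nom1 by auto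
  have Z2: "nominal_set Z2" and X2: "nominal_set X2" and Y2: "nominal_set Y2" and W2: "nominal_set W2"
    using nom2 by auto
  have p1: "equivariant Z1 X1 p1" and f1: "equivariant X1 W1 f1" and q1: "equivariant Z1 Y1 q1"
    and g1: "equivariant Y1 W1 g1" using eqv1 by auto
  have p2: "equivariant Z2 X2 p2" and f2: "equivariant X2 W2 f2" and q2: "equivariant Z2 Y2 q2"
    and g2: "equivariant Y2 W2 g2" using eqv2 by auto
  have com1: "\<forall>z\<in>ncarrier Z1. f1 (p1 z) = g1 (q1 z)" and sq1: "\<And>u v. f_safe X1 f1 u \<Longrightarrow> v \<in> ncarrier Y1 \<Longrightarrow>
      f1 u = g1 v \<Longrightarrow> fresh Y1 (bv X1 W1 f1 u) v \<Longrightarrow> \<exists>z\<in>ncarrier Z1. f_safe Z1 q1 z \<and> p1 z = u \<and> q1 z = v"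
    using safe1 unfolding safe_square_def by blast+
  have com2: "\<forall>z\<in>ncarrier Z2. f2 (p2 z) = g2 (q2 z)" and sq2: "\<And>u v. f_safe X2 f2 u \<Longrightarrow> v \<in> ncarrier Y2 \<Longrightarrow>
      f2 u = g2 v \<Longrightarrow> fresh Y2 (bv X2 W2 f2 u) v \<Longrightarrow> \<exists>z\<in>ncarrier Z2. f_safe Z2 q2 z \<and> p2 z = u \<and> q2 z = v"
    using safe2 unfolding safe_square_def by blast+
  show "safe_square (prod_nom Z1 Z2) (prod_nom X1 X2) (prod_nom Y1 Y2) (prod_nom W1 W2)
           (map_prod p1 p2) (map_prod f1 f2) (map_prod q1 q2) (map_prod g1 g2)"
    unfolding safe_square_def
  proof (intro conjI allI impI)
    show "\<forall>z\<in>ncarrier (prod_nom Z1 Z2). map_prod f1 f2 (map_prod p1 p2 z) = map_prod g1 g2 (map_prod q1 q2 z)"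
      using com1 com2 by (auto simp: prod_nom_def)
    fix u v
    assume h: "f_safe (prod_nom X1 X2) (map_prod f1 f2) u \<and> v \<in> ncarrier (prod_nom Y1 Y2) \<and>
      map_prod f1 f2 u = map_prod g1 g2 v \<and> fresh (prod_nom Y1 Y2) (bv (prod_nom X1 X2) (prod_nom W1 W2) (map_prod f1 f2) u) v"
    obtain u1 u2 where uu: "u = (u1, u2)" by (cases u)
    obtain v1 v2 where vv: "v = (v1, v2)" by (cases v)
    have u1: "u1 \<in> ncarrier X1" and u2: "u2 \<in> ncarrier X2" using h uu by (auto simp: f_safe_def prod_nom_def)
    have v1: "v1 \<in> ncarrier Y1" and v2: "v2 \<in> ncarrier Y2" using h vv by (auto simp: prod_nom_def)
    have e1: "f1 u1 = g1 v1" and e2: "f2 u2 = g2 v2" using h uu vv by auto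
    have fu1: "f1 u1 \<in> ncarrier W1" using equiv_in[OF f1 u1] .
    have fu2: "f2 u2 \<in> ncarrier W2" using equiv_in[OF f2 u2] .
    define U1 where "U1 = supp X1 u1"
    define U2 where "U2 = supp X2 u2"
    define V1 where "V1 = supp Y1 v1"
    define V2 where "V2 = supp Y2 v2"
    define W1' where "W1' = supp W1 (f1 u1)"
    define W2' where "W2' = supp W2 (f2 u2)"
    have finU1: "finite U1" unfolding U1_def using finite_supp[OF X1 u1] .
    have finU2: "finite U2" unfolding U2_def using finite_supp[OF X2 u2] .
    have finV1: "finite V1" unfolding V1_def using finite_supp[OF Y1 v1] .
    have finV2: "finite V2" unfolding V2_def using finite_supp[OF Y2 v2] .
    have WU1: "W1' \<subseteq> U1" unfolding W1'_def U1_def using supp_equivariant[OF f1 u1] .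
    have WU2: "W2' \<subseteq> U2" unfolding W2'_def U2_def using supp_equivariant[OF f2 u2] .
    have WV1: "W1' \<subseteq> V1" unfolding W1'_def V1_def using supp_equivariant[OF g1 v1] e1 by simp
    have WV2: "W2' \<subseteq> V2" unfolding W2'_def V2_def using supp_equivariant[OF g2 v2] e2 by simp
    have fr: "((U1 \<union> U2) - (W1' \<union> W2')) \<inter> (V1 \<union> V2) = {}"
    proof -
      have fr0: "fresh (prod_nom Y1 Y2) (bv (prod_nom X1 X2) (prod_nom W1 W2) (map_prod f1 f2) (u1,u2)) (v1,v2)"
        using h uu vv by simp
      thus ?thesis
        unfolding fresh_def bv_def map_prod_simp supp_prod[OF X1 X2 u1 u2] supp_prod[OF Y1 Y2 v1 v2]
          supp_prod[OF W1 W2 fu1 fu2] U1_def U2_def V1_def V2_def W1'_def W2'_def .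
    qed
    have sfu: "f_safe (prod_nom X1 X2) (map_prod f1 f2) (u1, u2)" using h uu by simp
    have C1: "f_safe X1 f1 u1 \<and> bv X1 W1 f1 u1 \<inter> U2 = {}"
    proof (rule comp_safe[OF X1 W1 f1 u1 finU2])
      fix y assume y: "y \<in> ncarrier X1" "f1 y = f1 u1"
      have "(y, u2) \<in> ncarrier (prod_nom X1 X2)" using y u2 by (simp add: prod_nom_def)
      hence "card (supp (prod_nom X1 X2) (y, u2)) \<le> card (supp (prod_nom X1 X2) (u1, u2))"
        using sfu y unfolding f_safe_def by auto
      thus "card (supp X1 y \<union> U2) \<le> card (supp X1 u1 \<union> U2)"
        using supp_prod[OF X1 X2 y(1) u2] supp_prod[OF X1 X2 u1 u2] unfolding U2_def by simp
    qed
    have C2: "f_safe X2 f2 u2 \<and> bv X2 W2 f2 u2 \<inter> U1 = {}"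
    proof (rule comp_safe[OF X2 W2 f2 u2 finU1])
      fix y assume y: "y \<in> ncarrier X2" "f2 y = f2 u2"
      have "(u1, y) \<in> ncarrier (prod_nom X1 X2)" using y u1 by (simp add: prod_nom_def)
      hence "card (supp (prod_nom X1 X2) (u1, y)) \<le> card (supp (prod_nom X1 X2) (u1, u2))"
        using sfu y unfolding f_safe_def by auto
      thus "card (supp X2 y \<union> U1) \<le> card (supp X2 u2 \<union> U1)"
        using supp_prod[OF X1 X2 u1 y(1)] supp_prod[OF X1 X2 u1 u2] unfolding U1_def
        by (simp add: Un_commute)
    qed
    have B1: "(U1 - W1') \<inter> U2 = {}" using C1 unfolding bv_def U1_def W1'_def by simp
    have B2: "(U2 - W2') \<inter> U1 = {}" using C2 unfolding bv_def U2_def W2'_def by simp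
    have fr1: "fresh Y1 (bv X1 W1 f1 u1) v1"
    proof -
      have "(U1 - W1') \<inter> V1 = {}" using fr B1 WU2 by blast
      thus ?thesis unfolding fresh_def bv_def U1_def W1'_def V1_def .
    qed
    have fr2: "fresh Y2 (bv X2 W2 f2 u2) v2"
    proof -
      have "(U2 - W2') \<inter> V2 = {}" using fr B2 WU1 by blast
      thus ?thesis unfolding fresh_def bv_def U2_def W2'_def V2_def .
    qed
    obtain z1 where z1: "z1 \<in> ncarrier Z1" "f_safe Z1 q1 z1" "p1 z1 = u1" "q1 z1 = v1"
      using sq1[OF conjunct1[OF C1] v1 e1 fr1] by blast
    obtain z2 where z2: "z2 \<in> ncarrier Z2" "f_safe Z2 q2 z2" "p2 z2 = u2" "q2 z2 = v2"
      using sq2[OF conjunct1[OF C2] v2 e2 fr2] by blast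
    have fz2: "finite (supp Z2 z2)" using finite_supp[OF Z2 z2(1)] .
    obtain \<pi>1 where r1: "fperm \<pi>1" "\<forall>a\<in>U1 \<union> V1. \<pi>1 a = a" "supp Z1 (nact Z1 \<pi>1 z1) \<inter> supp Z2 z2 \<subseteq> U1 \<union> V1"
      using rename_elem[OF Z1 z1(1) _ fz2] finU1 finV1 by blast
    define z1' where "z1' = nact Z1 \<pi>1 z1"
    have z1'c: "z1' \<in> ncarrier Z1" unfolding z1'_def using nom_closed[OF Z1 r1(1) z1(1)] .
    have fz1': "finite (supp Z1 z1')" using finite_supp[OF Z1 z1'c] .
    obtain \<pi>2 where r2: "fperm \<pi>2" "\<forall>a\<in>U2 \<union> V2. \<pi>2 a = a" "supp Z2 (nact Z2 \<pi>2 z2) \<inter> supp Z1 z1' \<subseteq> U2 \<union> V2"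
      using rename_elem[OF Z2 z2(1) _ fz1'] finU2 finV2 by blast
    define z2' where "z2' = nact Z2 \<pi>2 z2"
    have z2'c: "z2' \<in> ncarrier Z2" unfolding z2'_def using nom_closed[OF Z2 r2(1) z2(1)] .
    have pz1': "p1 z1' = u1"
      unfolding z1'_def using equiv_act[OF p1 r1(1) z1(1)] z1(3) fix_by_supp[OF X1 u1 r1(1)] r1(2)
      unfolding U1_def by simp
    have qz1': "q1 z1' = v1"
      unfolding z1'_def using equiv_act[OF q1 r1(1) z1(1)] z1(4) fix_by_supp[OF Y1 v1 r1(1)] r1(2)
      unfolding V1_def by simp
    have pz2': "p2 z2' = u2"
      unfolding z2'_def using equiv_act[OF p2 r2(1) z2(1)] z2(3) fix_by_supp[OF X2 u2 r2(1)] r2(2)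
      unfolding U2_def by simp
    have qz2': "q2 z2' = v2"
      unfolding z2'_def using equiv_act[OF q2 r2(1) z2(1)] z2(4) fix_by_supp[OF Y2 v2 r2(1)] r2(2)
      unfolding V2_def by simp
    have s1': "f_safe Z1 q1 z1'" unfolding z1'_def using safe_perm[OF Z1 Y1 q1 z1(2) r1(1)] .
    have s2': "f_safe Z2 q2 z2'" unfolding z2'_def using safe_perm[OF Z2 Y2 q2 z2(2) r2(1)] .
    have sub2: "U2 \<union> V2 \<subseteq> supp Z2 z2"
      using supp_equivariant[OF p2 z2(1)] supp_equivariant[OF q2 z2(1)] z2(3,4)
      unfolding U2_def V2_def by simp
    have I: "supp Z1 z1' \<inter> supp Z2 z2' \<subseteq> supp Y1 (q1 z1') \<inter> supp Y2 (q2 z2')"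
    proof
      fix a assume a: "a \<in> supp Z1 z1' \<inter> supp Z2 z2'"
      have a2: "a \<in> U2 \<union> V2" using a r2(3) unfolding z2'_def by blast
      hence "a \<in> supp Z2 z2" using sub2 by blast
      hence a1: "a \<in> U1 \<union> V1" using a r1(3) unfolding z1'_def by blast
      have "a \<in> V1"
      proof (rule ccontr)
        assume n: "a \<notin> V1"
        hence aU1: "a \<in> U1" using a1 by blast
        have "a \<in> U2"
        proof (cases "a \<in> V2")
          case True
          hence "a \<in> W1' \<union> W2'" using fr aU1 by blast
          thus ?thesis using n WV1 WU2 by blast
        next
          case False thus ?thesis using a2 by blast
        qed
        hence "a \<in> W1'" using B1 aU1 by blast
        thus False using n WV1 by blast
      qed
      moreover have "a \<in> V2"
      proof (rule ccontr)
        assume n: "a \<notin> V2"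
        hence aU2: "a \<in> U2" using a2 by blast
        have "a \<in> U1"
        proof (cases "a \<in> V1")
          case True
          hence "a \<in> W1' \<union> W2'" using fr aU2 by blast
          thus ?thesis using n WV2 WU1 by blast
        next
          case False thus ?thesis using a1 by blast
        qed
        hence "a \<in> W2'" using B2 aU2 by blast
        thus False using n WV2 by blast
      qed
      ultimately show "a \<in> supp Y1 (q1 z1') \<inter> supp Y2 (q2 z2')" using qz1' qz2' unfolding V1_def V2_def by simp
    qed
    have "f_safe (prod_nom Z1 Z2) (map_prod q1 q2) (z1', z2')"
      using prod_safe[OF Z1 Z2 Y1 Y2 q1 q2 s1' s2' I] .
    moreover have "(z1', z2') \<in> ncarrier (prod_nom Z1 Z2)" using z1'c z2'c by (simp add: prod_nom_def)
    ultimately show "\<exists>z\<in>ncarrier (prod_nom Z1 Z2). f_safe (prod_nom Z1 Z2) (map_prod q1 q2) z \<and>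
      map_prod p1 p2 z = u \<and> map_prod q1 q2 z = v"
      using pz1' pz2' qz1' qz2' uu vv by auto
  qed
  show "safe_square (sum_nom Z1 Z2) (sum_nom X1 X2) (sum_nom Y1 Y2) (sum_nom W1 W2)
           (map_sum p1 p2) (map_sum f1 f2) (map_sum q1 q2) (map_sum g1 g2)"
    unfolding safe_square_def
  proof (intro conjI allI impI)
    show "\<forall>z\<in>ncarrier (sum_nom Z1 Z2). map_sum f1 f2 (map_sum p1 p2 z) = map_sum g1 g2 (map_sum q1 q2 z)"
      using com1 com2 by (auto simp: sum_nom_def)
    fix u v
    assume h: "f_safe (sum_nom X1 X2) (map_sum f1 f2) u \<and> v \<in> ncarrier (sum_nom Y1 Y2) \<and>
      map_sum f1 f2 u = map_sum g1 g2 v \<and> fresh (sum_nom Y1 Y2) (bv (sum_nom X1 X2) (sum_nom W1 W2) (map_sum f1 f2) u) v"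
    show "\<exists>z\<in>ncarrier (sum_nom Z1 Z2). f_safe (sum_nom Z1 Z2) (map_sum q1 q2) z \<and>
      map_sum p1 p2 z = u \<and> map_sum q1 q2 z = v"
    proof (cases u)
      case (Inl u1)
      then obtain v1 where vv: "v = Inl v1" using h by (cases v) auto
      have u1: "u1 \<in> ncarrier X1" using h Inl by (auto simp: f_safe_def sum_nom_def)
      have v1: "v1 \<in> ncarrier Y1" using h vv by (auto simp: sum_nom_def)
      have e1: "f1 u1 = g1 v1" using h Inl vv by simp
      have s: "f_safe X1 f1 u1" unfolding f_safe_def
      proof (intro conjI ballI impI)
        show "u1 \<in> ncarrier X1" using u1 .
        fix y assume y: "y \<in> ncarrier X1" "f1 y = f1 u1"
        have "Inl y \<in> ncarrier (sum_nom X1 X2)" using y by (auto simp: sum_nom_def)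
        hence "card (supp (sum_nom X1 X2) (Inl y)) \<le> card (supp (sum_nom X1 X2) (Inl u1))"
          using h Inl y unfolding f_safe_def by auto
        thus "card (supp X1 y) \<le> card (supp X1 u1)" by (simp add: supp_Inl)
      qed
      have fr: "fresh Y1 (bv X1 W1 f1 u1) v1"
      proof -
        have "fresh (sum_nom Y1 Y2) (bv (sum_nom X1 X2) (sum_nom W1 W2) (map_sum f1 f2) (Inl u1)) (Inl v1)"
          using h Inl vv by simp
        thus ?thesis unfolding fresh_def bv_def map_sum.simps supp_Inl .
      qed
      obtain z1 where z1: "z1 \<in> ncarrier Z1" "f_safe Z1 q1 z1" "p1 z1 = u1" "q1 z1 = v1"
        using sq1[OF s v1 e1 fr] by blast
      have "f_safe (sum_nom Z1 Z2) (map_sum q1 q2) (Inl z1)" unfolding f_safe_def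
      proof (intro conjI ballI impI)
        show "Inl z1 \<in> ncarrier (sum_nom Z1 Z2)" using z1 by (auto simp: sum_nom_def)
        fix y assume y: "y \<in> ncarrier (sum_nom Z1 Z2)" "map_sum q1 q2 y = map_sum q1 q2 (Inl z1)"
        then obtain y1 where yy: "y = Inl y1" by (cases y) auto
        have "y1 \<in> ncarrier Z1" using y yy by (auto simp: sum_nom_def)
        moreover have "q1 y1 = q1 z1" using y yy by simp
        ultimately have "card (supp Z1 y1) \<le> card (supp Z1 z1)" using z1(2) by (simp add: f_safe_def)
        thus "card (supp (sum_nom Z1 Z2) y) \<le> card (supp (sum_nom Z1 Z2) (Inl z1))"
          using yy by (simp add: supp_Inl)
      qed
      moreover have "Inl z1 \<in> ncarrier (sum_nom Z1 Z2)" using z1 by (auto simp: sum_nom_def)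
      ultimately show ?thesis using z1 Inl vv by force
    next
      case (Inr u2)
      then obtain v2 where vv: "v = Inr v2" using h by (cases v) auto
      have u2: "u2 \<in> ncarrier X2" using h Inr by (auto simp: f_safe_def sum_nom_def)
      have v2: "v2 \<in> ncarrier Y2" using h vv by (auto simp: sum_nom_def)
      have e2: "f2 u2 = g2 v2" using h Inr vv by simp
      have s: "f_safe X2 f2 u2" unfolding f_safe_def
      proof (intro conjI ballI impI)
        show "u2 \<in> ncarrier X2" using u2 .
        fix y assume y: "y \<in> ncarrier X2" "f2 y = f2 u2"
        have "Inr y \<in> ncarrier (sum_nom X1 X2)" using y by (auto simp: sum_nom_def)
        hence "card (supp (sum_nom X1 X2) (Inr y)) \<le> card (supp (sum_nom X1 X2) (Inr u2))"
          using h Inr y unfolding f_safe_def by auto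
        thus "card (supp X2 y) \<le> card (supp X2 u2)" by (simp add: supp_Inr)
      qed
      have fr: "fresh Y2 (bv X2 W2 f2 u2) v2"
      proof -
        have "fresh (sum_nom Y1 Y2) (bv (sum_nom X1 X2) (sum_nom W1 W2) (map_sum f1 f2) (Inr u2)) (Inr v2)"
          using h Inr vv by simp
        thus ?thesis unfolding fresh_def bv_def map_sum.simps supp_Inr .
      qed
      obtain z2 where z2: "z2 \<in> ncarrier Z2" "f_safe Z2 q2 z2" "p2 z2 = u2" "q2 z2 = v2"
        using sq2[OF s v2 e2 fr] by blast
      have "f_safe (sum_nom Z1 Z2) (map_sum q1 q2) (Inr z2)" unfolding f_safe_def
      proof (intro conjI ballI impI)
        show "Inr z2 \<in> ncarrier (sum_nom Z1 Z2)" using z2 by (auto simp: sum_nom_def)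
        fix y assume y: "y \<in> ncarrier (sum_nom Z1 Z2)" "map_sum q1 q2 y = map_sum q1 q2 (Inr z2)"
        then obtain y2 where yy: "y = Inr y2" by (cases y) auto
        have "y2 \<in> ncarrier Z2" using y yy by (auto simp: sum_nom_def)
        moreover have "q2 y2 = q2 z2" using y yy by simp
        ultimately have "card (supp Z2 y2) \<le> card (supp Z2 z2)" using z2(2) by (simp add: f_safe_def)
        thus "card (supp (sum_nom Z1 Z2) y) \<le> card (supp (sum_nom Z1 Z2) (Inr z2))"
          using yy by (simp add: supp_Inr)
      qed
      moreover have "Inr z2 \<in> ncarrier (sum_nom Z1 Z2)" using z2 by (auto simp: sum_nom_def)
      ultimately show ?thesis using z2 Inr vv by force
    qed
  qed
qed


end
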